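(* Let $n\ge 2$ and let $F:(\mathcal{M}^n)^n\to\mathbb{R}$ be a nonnegative function which is additive in each variable and which vanishes whenever two of its arguments are proportional matrices of rank one. Define $G:(\mathcal{E}^n)^n\to\mathbb{R}$ by $G(E_1,\dots,E_n)=F(A_{E_1},\dots,A_{E_n})$. Let $S,T_1,T_2\subset\mathbb{R}^n$ be nondegenerate centered segments satisfying $T_1+\mathbb{R}S=T_2+\mathbb{R}S$. Then $G(T_1,S,E_1,\dots,E_{n-2})=G(T_2,S,E_1,\dots,E_{n-2})$ for all $E_1,\dots,E_{n-2}\in\mathcal{E}^n$. The same holds when the roles of the first two arguments are played by any two other arguments, in any order (i.e. $T_i$ placed in position $p$, $S$ in position $q\ne p$, and arbitrary centered ellipsoids in the remaining positions).
   Context: $\mathcal{M}^n$ is the set of real symmetric positive semidefinite $n\times n$ matrices; "additive in each variable" means $F(\dots,A+A',\dots)=F(\dots,A,\dots)+F(\dots,A',\dots)$ in each argument with the others fixed. A centered ellipsoid is a set $TB^n$ where $B^n$ is the Euclidean unit ball of $\mathbb{R}^n$ and $T:\mathbb{R}^n\to\mathbb{R}^n$ is any linear map (possibly degenerate); $\mathcal{E}^n$ is the set of centered ellipsoids (this includes centered segments $[-x,x]$ and $\{0\}$). For $E\in\mathcal{E}^n$, $A_E\in\mathcal{M}^n$ is the unique matrix with $h(E,u)^2=\langle u,A_Eu\rangle$ for all $u\in\mathbb{R}^n$, where $h(E,u)=\max_{x\in E}\langle x,u\rangle$ is the support function (if $E=TB^n$ then $A_E=TT^*$). For a set $S$, $\mathbb{R}S=\{\lambda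 x:\lambda\in\mathbb{R},x\in S\}$, and $+$ denotes Minkowski addition. A centered segment is nondegenerate if it has positive length. *)

theory Defs
  imports "HOL-Analysis.Analysis"
begin

definition psd_mat :: "real^'n^'n \<Rightarrow> bool" where
  "psd_mat A \<longleftrightarrow> transpose A = A \<and> (\<forall>x. 0 \<le> x \<bullet> (A *v x))"

definition centered_ellipsoid :: "(real^'n) set \<Rightarrow> bool" where
  "centered_ellipsoid E \<longleftrightarrow> (\<exists>T :: real^'n^'n. E = (\<lambda>x. T *v x) ` cball 0 1)"

definition supp_fun :: "(real^'n) set \<Rightarrow> real^'n \<Rightarrow> real" where
  "supp_fun E u = (SUP x\<in>E. x \<bullet> u)"

definition ell_mat :: "(real^'n) set \<Rightarrow> real^'n^'n" where
  "ell_mat E = (THE A. psd_mat A \<and> (\<forall>u. (supp_fun E u)^2 = u \<bullet> (A *v u)))"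

definition nondeg_centered_segment :: "(real^'n) set \<Rightarrow> bool" where
  "nondeg_centered_segment S \<longleftrightarrow> (\<exists>x. x \<noteq> 0 \<and> S = closed_segment (-x) x)"

definition real_span_set :: "(real^'n) set \<Rightarrow> (real^'n) set" where
  "real_span_set S = {c *\<^sub>R x | c x. x \<in> S}"

definition mink_sum :: "(real^'n) set \<Rightarrow> (real^'n) set \<Rightarrow> (real^'n) set" where
  "mink_sum A B = {a + b | a b. a \<in> A \<and> b \<in> B}"

definition nonneg_on_psd :: "(('n \<Rightarrow> real^'n^'n) \<Rightarrow> real) \<Rightarrow> bool" where
  "nonneg_on_psd F \<longleftrightarrow> (\<forall>M. (\<forall>i. psd_mat (M i)) \<longrightarrow> 0 \<le> F M)"

definition multiadditive_on_psd :: "(('n \<Rightarrow> real^'n^'n) \<Rightarrow> real) \<Rightarrow> bool" where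
  "multiadditive_on_psd F \<longleftrightarrow>
     (\<forall>M i A A'. (\<forall>j. psd_mat (M j)) \<longrightarrow> psd_mat A \<longrightarrow> psd_mat A' \<longrightarrow>
        F (M(i := A + A')) = F (M(i := A)) + F (M(i := A')))"

definition vanishes_prop_rank_one :: "(('n \<Rightarrow> real^'n^'n) \<Rightarrow> real) \<Rightarrow> bool" where
  "vanishes_prop_rank_one F \<longleftrightarrow>
     (\<forall>M i j. (\<forall>k. psd_mat (M k)) \<longrightarrow> i \<noteq> j \<longrightarrow> rank (M i) = 1 \<longrightarrow> rank (M j) = 1 \<longrightarrow>
        (\<exists>c. M i = c *\<^sub>R M j) \<longrightarrow> F M = 0)"

end

theory Submission imports Defs begin

definition outer :: "real^'n \<Rightarrow> real^'n^'n" where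
  "outer t = (\<chi> i j. t$i * t$j)"

lemma outer_mult: "outer t *v x = (t \<bullet> x) *\<^sub>R t"
  by (simp add: outer_def matrix_vector_mult_def inner_vec_def vec_eq_iff sum_distrib_left mult_ac)

lemma psd_outer: "psd_mat (outer t)"
proof -
  have "transpose (outer t) = outer t"
    by (simp add: transpose_def outer_def vec_eq_iff mult.commute)
  moreover have "0 \<le> x \<bullet> (outer t *v x)" for x
    by (simp add: outer_mult inner_commute)
  ultimately show ?thesis by (simp add: psd_mat_def)
qed

lemma outer_scale: "outer (c *\<^sub>R t) = c^2 *\<^sub>R outer t"
  by (simp add: outer_def vec_eq_iff power2_eq_square mult_ac)

lemma outer_neg: "outer (- t) = outer t"
  by (simp add: outer_def vec_eq_iff)

lemma outer_par: "outer (x+y) + outer (x-y) = outer x + outer x + outer y + outer y"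
  by (simp add: outer_def vec_eq_iff algebra_simps)

lemma outer_zero: "outer 0 = 0"
  by (simp add: outer_def vec_eq_iff)

lemma rank_outer: assumes "t \<noteq> 0" shows "rank (outer t) = 1"
proof -
  have "range (\<lambda>x. outer t *v x) = span {t}"
  proof
    show "range (\<lambda>x. outer t *v x) \<subseteq> span {t}"
      by (auto simp: outer_mult span_singleton)
  next
    show "span {t} \<subseteq> range (\<lambda>x. outer t *v x)"
    proof
      fix y assume "y \<in> span {t}"
      then obtain c where y: "y = c *\<^sub>R t" by (auto simp: span_singleton)
      have tt: "t \<bullet> t \<noteq> 0" using assms by simp
      have "outer t *v ((c / (t \<bullet> t)) *\<^sub>R t) = y"
        using tt by (simp add: outer_mult y)
      then show "y \<in> range (\<lambda>x. outer t *v x)" by (metis rangeI)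
    qed
  qed
  then show ?thesis using assms by (simp add: rank_dim_range)
qed

lemma psd_add: "psd_mat A \<Longrightarrow> psd_mat B \<Longrightarrow> psd_mat (A + B)"
  by (simp add: psd_mat_def matrix_vector_mult_add_rdistrib inner_add_right transpose_def vec_eq_iff)

lemma psd_unique:
  assumes "psd_mat A" "psd_mat B" "\<forall>u. u \<bullet> (A *v u) = u \<bullet> (B *v u)"
  shows "A = B"
proof -
  define C where "C = A - B"
  have symC: "transpose C = C" using assms(1,2)
    by (simp add: C_def psd_mat_def transpose_def vec_eq_iff)
  have q: "u \<bullet> (C *v u) = 0" for u using assms(3)
    by (simp add: C_def matrix_vector_mult_diff_rdistrib inner_diff_right)
  have sym: "x \<bullet> (C *v y) = y \<bullet> (C *v x)" for x y
  proof -
    have "x \<bullet> (C *v y) = (y v* transpose C) \<bullet> x"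
      by (metis dot_lmul_matrix inner_commute transpose_matrix_vector transpose_transpose)
    also have "\<dots> = y \<bullet> (C *v x)" using symC by (simp add: dot_lmul_matrix)
    finally show ?thesis .
  qed
  have "x \<bullet> (C *v y) = 0" for x y
  proof -
    have "(x+y) \<bullet> (C *v (x+y)) = x \<bullet> (C *v x) + y \<bullet> (C *v y) + 2 * (x \<bullet> (C *v y))"
      using sym[of y x] by (simp add: matrix_vector_right_distrib inner_add_left inner_add_right)
    then show ?thesis using q by simp
  qed
  then have "C *v y = 0 *v y" for y by (metis inner_eq_zero_iff matrix_vector_mult_0)
  then have "C = 0" by (metis matrix_eq)
  then show ?thesis by (simp add: C_def)
qed

lemma ell_mat_eq:
  assumes "psd_mat A" "\<forall>u. (supp_fun E u)^2 = u \<bullet> (A *v u)"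
  shows "ell_mat E = A"
  unfolding ell_mat_def
proof (rule the_equality)
  show "psd_mat A \<and> (\<forall>u. (supp_fun E u)\<^sup>2 = u \<bullet> (A *v u))" using assms by blast
  fix B assume "psd_mat B \<and> (\<forall>u. (supp_fun E u)\<^sup>2 = u \<bullet> (B *v u))"
  then show "B = A" using assms psd_unique[of B A] by auto
qed

lemma supp_seg: "supp_fun (closed_segment (-t) t) u = \<bar>t \<bullet> u\<bar>"
  unfolding supp_fun_def
proof (rule cSup_eq_maximum)
  show "\<bar>t \<bullet> u\<bar> \<in> (\<lambda>x. x \<bullet> u) ` closed_segment (- t) t"
    by (cases "t \<bullet> u \<ge> 0") (auto intro!: image_eqI[where x=t] image_eqI[where x="-t"])
  have H: "\<forall>y\<in>(\<lambda>x. x \<bullet> u) ` closed_segment (- t) t. y \<le> \<bar>t \<bullet> u\<bar>"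
  proof
    fix y assume "y \<in> (\<lambda>x. x \<bullet> u) ` closed_segment (- t) t"
    then obtain c where c: "0 \<le> c" "c \<le> 1" "y = ((1 - c) *\<^sub>R (-t) + c *\<^sub>R t) \<bullet> u"
      by (auto simp: closed_segment_def)
    have "(1 - c) *\<^sub>R (-t) + c *\<^sub>R t = (2*c - 1) *\<^sub>R t" by (simp add: vec_eq_iff algebra_simps)
    then have "y = (2*c - 1) * (t \<bullet> u)" using c(3) by simp
    moreover have "\<bar>2*c-1\<bar> \<le> 1" using c by auto
    ultimately have "\<bar>y\<bar> \<le> \<bar>t \<bullet> u\<bar>"
      by (simp add: abs_mult mult_left_le_one_le)
    then show "y \<le> \<bar>t \<bullet> u\<bar>" by simp
  qed
  then show "\<And>y. y \<in> (\<lambda>x. x \<bullet> u) ` closed_segment (- t) t \<Longrightarrow> y \<le> \<bar>t \<bullet> u\<bar>" by blast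
qed

lemma ell_seg: "ell_mat (closed_segment (-t) t) = outer t"
  by (rule ell_mat_eq) (auto simp: psd_outer supp_seg outer_mult power2_eq_square inner_commute)

lemma supp_ell: "supp_fun ((\<lambda>x. T *v x) ` cball 0 1) u = norm (transpose T *v u)"
  unfolding supp_fun_def image_comp o_def
proof (rule cSup_eq_maximum)
  define w where "w = transpose T *v u"
  have eq: "(T *v x) \<bullet> u = x \<bullet> w" for x
    by (simp add: w_def dot_lmul_matrix[symmetric] inner_commute)
  have "norm w \<in> (\<lambda>x. (T *v x) \<bullet> u) ` cball 0 1"
  proof (cases "w = 0")
    case True then show ?thesis by (auto simp: eq intro!: image_eqI[where x=0])
  next
    case False
    then show ?thesis
      by (auto simp: eq intro!: image_eqI[where x="w /\<^sub>R norm w"])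
         (simp add: dot_square_norm power2_eq_square field_simps)
  qed
  then show "norm (transpose T *v u) \<in> (\<lambda>x. (T *v x) \<bullet> u) ` cball 0 1" by (simp only: w_def)
  have H: "\<forall>y\<in>(\<lambda>x. (T *v x) \<bullet> u) ` cball 0 1. y \<le> norm (transpose T *v u)"
  proof
    fix y assume "y \<in> (\<lambda>x. (T *v x) \<bullet> u) ` cball 0 1"
    then obtain x where x: "norm x \<le> 1" "y = x \<bullet> w" by (auto simp: eq)
    have "x \<bullet> w \<le> norm x * norm w" by (rule norm_cauchy_schwarz)
    also have "\<dots> \<le> norm w" using x(1) by (simp add: mult_left_le_one_le)
    finally show "y \<le> norm (transpose T *v u)" using x by (simp add: w_def)
  qed
  then show "\<And>y. y \<in> (\<lambda>x. (T *v x) \<bullet> u) ` cball 0 1 \<Longrightarrow> y \<le> norm (transpose T *v u)" by blast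
qed

lemma psd_ell: fixes E :: "(real^'n) set" assumes "centered_ellipsoid E" shows "psd_mat (ell_mat E)"
proof -
  obtain T :: "real^'n^'n" where E: "E = (\<lambda>x. T *v x) ` cball 0 1"
    using assms by (auto simp: centered_ellipsoid_def)
  have q: "u \<bullet> ((T ** transpose T) *v u) = (transpose T *v u) \<bullet> (transpose T *v u)" for u
    by (metis dot_lmul_matrix matrix_vector_mul_assoc transpose_matrix_vector)
  have p: "psd_mat (T ** transpose T)"
    unfolding psd_mat_def by (simp add: matrix_transpose_mul q)
  have "ell_mat E = T ** transpose T"
    by (rule ell_mat_eq[OF p]) (simp add: E supp_ell q dot_square_norm)
  then show ?thesis using p by simp
qed

lemma midpoint_nonneg_const:
  fixes g :: "real \<Rightarrow> real"
  assumes rec: "\<And>a b. g (a+b) + g (a-b) = 2 * g a" and nn: "\<And>x. 0 \<le> g x"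
  shows "g x = g 0"
proof -
  have lin: "g (real k * y) = g 0 + real k * (g y - g 0) \<and> g (real (Suc k) * y) = g 0 + real (Suc k) * (g y - g 0)" for k y
  proof (induction k)
    case 0 then show ?case by simp
  next
    case (Suc k)
    have "g (real (Suc (Suc k)) * y) = 2 * g (real (Suc k) * y) - g (real k * y)"
      using rec[of "real (Suc k) * y" y] by (simp add: algebra_simps)
    with Suc show ?case by (simp add: algebra_simps)
  qed
  have neg: "g (-x) - g 0 = - (g x - g 0)" using rec[of 0 x] by simp
  show ?thesis
  proof (rule ccontr)
    assume ne: "g x \<noteq> g 0"
    obtain y where y: "g y - g 0 < 0"
    proof (cases "g x - g 0 < 0")
      case True then show ?thesis using that by blast
    next
      case False then have "g (-x) - g 0 < 0" using ne neg by simp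
      then show ?thesis using that by blast
    qed
    define d where "d = g 0 - g y"
    have d: "d > 0" using y d_def by simp
    obtain k :: nat where k: "g 0 / d < real k" using reals_Archimedean2 by blast
    have "g 0 < real k * d" using k d by (simp add: field_simps)
    moreover have "g (real k * y) = g 0 - real k * d" using lin[of k y] by (simp add: d_def algebra_simps)
    ultimately show False using nn[of "real k * y"] by simp
  qed
qed

lemma seg_elem: fixes t :: "real^'n" shows "x \<in> closed_segment (-t) t \<Longrightarrow> \<exists>a. \<bar>a\<bar> \<le> 1 \<and> x = a *\<^sub>R t"
proof -
  assume "x \<in> closed_segment (-t) t"
  then obtain c where c: "0 \<le> c" "c \<le> 1" "x = (1 - c) *\<^sub>R (-t) + c *\<^sub>R t"
    by (auto simp: closed_segment_def)
  have "(1 - c) *\<^sub>R (-t) + c *\<^sub>R t = (2*c - 1) *\<^sub>R t" by (simp add: vec_eq_iff algebra_simps)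
  then have "x = (2*c - 1) *\<^sub>R t" using c(3) by simp
  moreover have "\<bar>2*c-1\<bar> \<le> 1" using c by auto
  ultimately show ?thesis by blast
qed

lemma sum_decomp:
  assumes "mink_sum (closed_segment (-t1) t1) (real_span_set (closed_segment (-s) s))
         = mink_sum (closed_segment (-t2) t2) (real_span_set (closed_segment (-s) s))"
  shows "\<exists>a l. \<bar>a\<bar> \<le> 1 \<and> t2 = a *\<^sub>R t1 + l *\<^sub>R s"
proof -
  have "t2 \<in> mink_sum (closed_segment (-t2) t2) (real_span_set (closed_segment (-s) s))"
    unfolding mink_sum_def real_span_set_def
    by (rule CollectI, rule exI[of _ t2], rule exI[of _ 0]) (auto intro!: exI[of _ 0] exI[of _ s])
  then have "t2 \<in> mink_sum (closed_segment (-t1) t1) (real_span_set (closed_segment (-s) s))"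
    using assms by simp
  then obtain a' c x' where h: "a' \<in> closed_segment (-t1) t1" "x' \<in> closed_segment (-s) s" "t2 = a' + c *\<^sub>R x'"
    unfolding mink_sum_def real_span_set_def by blast
  obtain a where a: "\<bar>a\<bar> \<le> 1" "a' = a *\<^sub>R t1" using seg_elem[OF h(1)] by blast
  obtain b where b: "x' = b *\<^sub>R s" using seg_elem[OF h(2)] by blast
  have "t2 = a *\<^sub>R t1 + (c*b) *\<^sub>R s" using h(3) a b by simp
  then show ?thesis using a by blast
qed

theorem lemma4:
  fixes F :: "('n::finite \<Rightarrow> real^'n^'n) \<Rightarrow> real"
    and S T1 T2 :: "(real^'n) set"
    and E :: "'n \<Rightarrow> (real^'n) set"
    and p q :: 'n
  assumes "CARD('n) \<ge> 2"
    and "nonneg_on_psd F"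
    and "multiadditive_on_psd F"
    and "vanishes_prop_rank_one F"
    and "nondeg_centered_segment S"
    and "nondeg_centered_segment T1"
    and "nondeg_centered_segment T2"
    and "mink_sum T1 (real_span_set S) = mink_sum T2 (real_span_set S)"
    and "p \<noteq> q"
    and "\<forall>i. centered_ellipsoid (E i)"
  shows "F (\<lambda>i. ell_mat ((E(p := T1, q := S)) i)) = F (\<lambda>i. ell_mat ((E(p := T2, q := S)) i))"
proof -
  obtain s where s: "s \<noteq> 0" "S = closed_segment (-s) s" using assms(5) by (auto simp: nondeg_centered_segment_def)
  obtain t1 where t1: "t1 \<noteq> 0" "T1 = closed_segment (-t1) t1" using assms(6) by (auto simp: nondeg_centered_segment_def)
  obtain t2 where t2: "t2 \<noteq> 0" "T2 = closed_segment (-t2) t2" using assms(7) by (auto simp: nondeg_centered_segment_def)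
  define N where "N = (\<lambda>i. ell_mat (E i))(q := outer s)"
  define \<Phi> where "\<Phi> A = F (N(p := A))" for A
  have Npsd: "psd_mat (N j)" for j
    using assms(10) by (auto simp: N_def psd_outer psd_ell)
  have reT: "(\<lambda>i. ell_mat ((E(p := closed_segment (-t) t, q := S)) i)) = N(p := outer t)" for t
    using assms(9) by (auto simp: fun_eq_iff N_def ell_seg s(2))
  have add: "\<Phi> (A + B) = \<Phi> A + \<Phi> B" if "psd_mat A" "psd_mat B" for A B
    using assms(3) Npsd that unfolding multiadditive_on_psd_def \<Phi>_def by blast
  have nn: "0 \<le> \<Phi> A" if "psd_mat A" for A
    using assms(2) Npsd that unfolding nonneg_on_psd_def \<Phi>_def
    by (metis fun_upd_apply)
  have van: "\<Phi> (outer (k *\<^sub>R s)) = 0" for k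
  proof (cases "k = 0")
    case True
    have "\<Phi> (outer 0) = \<Phi> (outer 0) + \<Phi> (outer 0)"
      using add[OF psd_outer psd_outer, of 0 0] by (simp add: outer_zero)
    then show ?thesis using True by simp
  next
    case False
    let ?M = "N(p := outer (k *\<^sub>R s))"
    have "\<forall>k. psd_mat (?M k)" using Npsd psd_outer by simp
    moreover have "rank (?M p) = 1" using False s(1) by (simp add: rank_outer)
    moreover have "rank (?M q) = 1" using assms(9) s(1) by (simp add: rank_outer N_def)
    moreover have "?M p = k^2 *\<^sub>R ?M q" using assms(9) by (simp add: N_def outer_scale)
    ultimately have "F ?M = 0" using assms(4) assms(9) unfolding vanishes_prop_rank_one_def by blast
    then show ?thesis by (simp add: \<Phi>_def)
  qed
  have par_zero: "\<Phi> (outer t) = 0" if "t = k *\<^sub>R s" for t k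
    using van that by simp
  have dec1: "\<exists>a l. \<bar>a\<bar> \<le> 1 \<and> t2 = a *\<^sub>R t1 + l *\<^sub>R s"
    by (rule sum_decomp) (use assms(8) s t1 t2 in simp)
  have dec2: "\<exists>a l. \<bar>a\<bar> \<le> 1 \<and> t1 = a *\<^sub>R t2 + l *\<^sub>R s"
    by (rule sum_decomp) (use assms(8) s t1 t2 in simp)
  obtain a l where al: "\<bar>a\<bar> \<le> 1" "t2 = a *\<^sub>R t1 + l *\<^sub>R s" using dec1 by blast
  obtain a' l' where al': "\<bar>a'\<bar> \<le> 1" "t1 = a' *\<^sub>R t2 + l' *\<^sub>R s" using dec2 by blast
  have t1eq: "t1 = (a'*a) *\<^sub>R t1 + (a'*l + l') *\<^sub>R s"
    using al'(2) al(2) by (simp add: algebra_simps)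
  have key: "\<Phi> (outer t1) = \<Phi> (outer t2)"
  proof (cases "a' * a = 1")
    case False
    have "(1 - a'*a) *\<^sub>R t1 = (a'*l + l') *\<^sub>R s"
      using t1eq by (simp add: algebra_simps)
    then have t1k: "t1 = ((a'*l + l') / (1 - a'*a)) *\<^sub>R s" using False
      by (metis (no_types, lifting) divide_inverse_commute eq_iff_diff_eq_0 mult.commute scaleR_scaleR scaleR_one right_inverse)
    then have "t2 = (a * ((a'*l + l') / (1 - a'*a)) + l) *\<^sub>R s" using al(2) by (simp add: algebra_simps)
    with t1k show ?thesis using par_zero by metis
  next
    case True
    have "\<bar>a\<bar> = 1"
    proof (rule ccontr)
      assume "\<bar>a\<bar> \<noteq> 1"
      then have "\<bar>a\<bar> < 1" using al(1) by simp
      then have "\<bar>a'\<bar> * \<bar>a\<bar> < 1" using al'(1)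
        by (metis abs_ge_zero le_less_trans mult_left_le_one_le not_less)
      then show False using True by (simp add: abs_mult[symmetric])
    qed
    then obtain m where m: "outer t2 = outer (t1 + m *\<^sub>R s)"
    proof (cases "a = 1")
      case True then show ?thesis using that[of l] al(2) by simp
    next
      case False
      then have "a = -1" using \<open>\<bar>a\<bar> = 1\<close> by auto
      then have "t2 = - (t1 + (-l) *\<^sub>R s)" using al(2) by simp
      then have "outer t2 = outer (t1 + (-l) *\<^sub>R s)" by (simp only: outer_neg)
      then show ?thesis using that by blast
    qed
    define g where "g x = \<Phi> (outer (t1 + x *\<^sub>R s))" for x
    have rec: "g (x+y) + g (x-y) = 2 * g x" for x y
    proof -
      let ?u = "t1 + x *\<^sub>R s" and ?v = "y *\<^sub>R s"
      have "g (x+y) + g (x-y) = \<Phi> (outer (?u + ?v)) + \<Phi> (outer (?u - ?v))"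
        by (simp add: g_def algebra_simps)
      also have "\<dots> = \<Phi> (outer (?u + ?v) + outer (?u - ?v))"
        by (simp add: add psd_outer)
      also have "\<dots> = \<Phi> (outer ?u + outer ?u + outer ?v + outer ?v)"
        by (simp only: outer_par)
      also have "\<dots> = \<Phi> (outer ?u) + \<Phi> (outer ?u) + \<Phi> (outer ?v) + \<Phi> (outer ?v)"
      proof -
        have p1: "psd_mat (outer ?u + outer ?u)" by (rule psd_add[OF psd_outer psd_outer])
        have p2: "psd_mat (outer ?u + outer ?u + outer ?v)" by (rule psd_add[OF p1 psd_outer])
        show ?thesis by (simp only: add[OF p2 psd_outer] add[OF p1 psd_outer] add[OF psd_outer psd_outer])
      qed
      also have "\<dots> = 2 * g x" by (simp add: van g_def)
      finally show ?thesis .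
    qed
    have "g m = g 0"
      by (rule midpoint_nonneg_const[OF rec]) (simp add: g_def nn psd_outer)
    then show ?thesis by (simp add: g_def m)
  qed
  show ?thesis
    using key reT[of t1] reT[of t2] t1(2) t2(2) by (simp add: \<Phi>_def)
qed

end
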